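(* Let $\mu$ be a Borel probability measure on $\mathbb{T}^n$ and let $(B_1,\dots,B_n)$ be an $n$-tuple of matrices in $M_n(\mathbb{Z})$ which is strongly independent over $\mathbb{Q}$. If there is a nonzero $k\in\mathbb{Z}^{n\times 1}$ such that $\hat\mu(B_ik)=1$ for every $1\le i\le n$, then $\mu$ is finitely supported.
   Context: For $k=(k_1,\dots,k_n)^T\in\mathbb{Z}^{n\times 1}$ and $z=(z_1,\dots,z_n)\in\mathbb{T}^n$, $z^k=z_1^{k_1}\cdots z_n^{k_n}$ and $\hat\mu(k)=\int_{\mathbb{T}^n}z^k\,d\mu(z)$. An $n$-tuple $(B_1,\dots,B_n)$ of integer $n\times n$ matrices is strongly independent over $\mathbb{Q}$ if for every nonzero $v\in\mathbb{Q}^{n\times 1}$ the vectors $B_1v,\dots,B_nv$ are linearly independent over $\mathbb{Q}$. *)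

theory Defs
  imports "HOL-Probability.Probability"
begin

definition torus :: "(complex ^ 'n) set" where
  "torus = {z. \<forall>i. norm (z $ i) = 1}"

definition monom_pow :: "complex ^ 'n \<Rightarrow> int ^ 'n \<Rightarrow> complex" where
  "monom_pow z k = (\<Prod>i\<in>UNIV. (z $ i) powi (k $ i))"

definition fourier_coeff :: "(complex ^ 'n) measure \<Rightarrow> int ^ 'n \<Rightarrow> complex" where
  "fourier_coeff M k = integral\<^sup>L M (\<lambda>z. monom_pow z k)"

definition rat_mat :: "int ^ 'n ^ 'm \<Rightarrow> rat ^ 'n ^ 'm" where
  "rat_mat A = (\<chi> r c. of_int (A $ r $ c))"

definition strongly_independent :: "('n \<Rightarrow> int ^ 'n ^ 'n) \<Rightarrow> bool" where
  "strongly_independent B \<longleftrightarrow>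
     (\<forall>v :: rat ^ 'n. v \<noteq> 0 \<longrightarrow>
        (\<forall>c :: 'n \<Rightarrow> rat. (\<Sum>i\<in>UNIV. c i *s (rat_mat (B i) *v v)) = 0 \<longrightarrow> (\<forall>i. c i = 0)))"

definition borel_prob_on_torus :: "(complex ^ 'n) measure \<Rightarrow> bool" where
  "borel_prob_on_torus M \<longleftrightarrow> prob_space M \<and> sets M = sets (restrict_space borel torus)"

definition finitely_supported :: "'a measure \<Rightarrow> bool" where
  "finitely_supported M \<longleftrightarrow> (\<exists>S. finite S \<and> S \<in> sets M \<and> emeasure M S = emeasure M (space M))"

end

theory Submission
  imports Defs
begin

lemma power_int_sum_exp:
  fixes x :: complex
  assumes "x \<noteq> 0" "finite A"
  shows "x powi (\<Sum>i\<in>A. f i) = (\<Prod>i\<in>A. x powi f i)"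
  using assms(2) by (induction A rule: finite_induct) (auto simp: power_int_add assms(1))

lemma power_int_prod_base:
  fixes f :: "'a \<Rightarrow> complex"
  assumes "finite A"
  shows "(\<Prod>i\<in>A. f i) powi m = (\<Prod>i\<in>A. f i powi m)"
  using assms by (induction A rule: finite_induct) (auto simp: power_int_mult_distrib)

lemma AE_monom_one:
  fixes M :: "(complex ^ 'n) measure"
  assumes P: "prob_space M" and sp: "space M = torus" and F: "fourier_coeff M m = 1"
  shows "AE z in M. monom_pow z m = 1"
proof -
  interpret prob_space M by (rule P)
  define f where "f = (\<lambda>z. monom_pow z m)"
  have intf: "integrable M f"
    using F not_integrable_integral_eq unfolding fourier_coeff_def f_def by force
  have normf: "norm (f z) = 1" if "z \<in> space M" for z
  proof -
    have "\<And>i. norm (z $ i) = 1" using that sp unfolding torus_def by auto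
    then show ?thesis unfolding f_def monom_pow_def
      by (simp add: prod_norm[symmetric] norm_power_int)
  qed
  define g where "g = (\<lambda>z. 1 - Re (f z))"
  have intg: "integrable M g" unfolding g_def using intf by auto
  have gnn: "AE z in M. 0 \<le> g z"
  proof (rule AE_I2)
    fix z assume "z \<in> space M"
    then have "Re (f z) \<le> 1" using normf complex_Re_le_cmod by metis
    then show "0 \<le> g z" unfolding g_def by simp
  qed
  have "integral\<^sup>L M g = 1 - Re (integral\<^sup>L M f)"
    unfolding g_def using intf by (simp add: prob_space)
  also have "\<dots> = 0" using F unfolding fourier_coeff_def f_def by simp
  finally have "AE z in M. g z = 0" using integral_nonneg_eq_0_iff_AE[OF intg gnn] by simp
  then show ?thesis
  proof (rule AE_mp[OF _ AE_I2], intro impI)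
    fix z assume z: "z \<in> space M" "g z = 0"
    then have re: "Re (f z) = 1" unfolding g_def by simp
    have "norm (f z) = 1" using normf z by simp
    then have "(Re (f z))^2 + (Im (f z))^2 = 1"
      by (metis cmod_power2 power_one)
    then have "Im (f z) = 0" using re by simp
    then show "monom_pow z m = 1" using re unfolding f_def by (simp add: complex_eq_iff)
  qed
qed

lemma roots_from_indep:
  fixes c :: "'n \<Rightarrow> int^'n"
  assumes indep: "\<forall>a::'n\<Rightarrow>rat. (\<Sum>i\<in>UNIV. a i *s (\<chi> j. of_int (c i $ j))) = 0 \<longrightarrow> (\<forall>i. a i = 0)"
  shows "\<exists>N::nat. N > 0 \<and> (\<forall>z::complex^'n. (\<forall>j. z$j \<noteq> 0) \<longrightarrow> (\<forall>i. monom_pow z (c i) = 1) \<longrightarrow> (\<forall>j. z$j ^ N = 1))"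
proof -
  define Cq :: "rat^'n^'n" where "Cq = (\<chi> i j. of_int (c i $ j))"
  have "\<exists>D::rat^'n^'n. Cq ** D = mat 1"
    unfolding matrix_right_invertible_independent_rows
    using indep unfolding Cq_def row_def by (simp add: vec_lambda_eta)
  then obtain D :: "rat^'n^'n" where "Cq ** D = mat 1" by blast
  then have DC: "D ** Cq = mat 1" using matrix_left_right_inverse by blast
  define q where "q = (\<lambda>i j. snd (quotient_of (D$i$j)))"
  define Ni where "Ni = (\<Prod>p\<in>UNIV. q (fst p) (snd p))"
  have qpos: "q i j > 0" for i j unfolding q_def using quotient_of_denom_pos' by simp
  have Nipos: "Ni > 0" unfolding Ni_def using qpos by (intro prod_pos) auto
  have "\<exists>e::int. of_int e = of_int Ni * D$i$j" for i j
  proof -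
    obtain p where pq: "quotient_of (D$i$j) = (p, q i j)" unfolding q_def by (metis prod.collapse)
    have Dij: "D$i$j = of_int p / of_int (q i j)" using quotient_of_div[OF pq] .
    have "q i j dvd Ni" unfolding Ni_def
      using dvd_prodI[of "UNIV" "(i,j)" "\<lambda>p. q (fst p) (snd p)"] by simp
    then obtain r where r: "Ni = q i j * r" by blast
    show ?thesis
      by (rule exI[of _ "p * r"]) (use qpos[of i j] in \<open>simp add: Dij r field_simps\<close>)
  qed
  then obtain E :: "'n \<Rightarrow> 'n \<Rightarrow> int" where E: "\<And>i j. of_int (E i j) = of_int Ni * D$i$j"
    by metis
  have key: "(\<Sum>i\<in>UNIV. E j i * c i $ l) = (if j = l then Ni else 0)" for j l
  proof -
    have "(of_int (\<Sum>i\<in>UNIV. E j i * c i $ l) :: rat) = of_int Ni * (D ** Cq) $ j $ l"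
      by (simp add: E matrix_matrix_mult_def Cq_def sum_distrib_left mult.assoc)
    also have "\<dots> = of_int (if j = l then Ni else 0)" using DC by (simp add: mat_def)
    finally show ?thesis by (simp only: of_int_eq_iff)
  qed
  show ?thesis
  proof (intro exI[of _ "nat Ni"] conjI allI impI)
    show "0 < nat Ni" using Nipos by simp
    fix z :: "complex^'n" and j
    assume nz: "\<forall>j. z$j \<noteq> 0" and one: "\<forall>i. monom_pow z (c i) = 1"
    have "z$j ^ nat Ni = z$j powi Ni" using Nipos by (simp add: power_int_nonneg_exp)
    also have "\<dots> = (\<Prod>l\<in>UNIV. z$l powi (if j = l then Ni else 0))"
      by (simp add: if_distrib prod.delta cong: if_cong)
    also have "\<dots> = (\<Prod>l\<in>UNIV. z$l powi (\<Sum>i\<in>UNIV. E j i * c i $ l))"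
      by (simp add: key)
    also have "\<dots> = (\<Prod>l\<in>UNIV. \<Prod>i\<in>UNIV. (z$l powi c i $ l) powi E j i)"
      using nz by (simp add: power_int_sum_exp power_int_mult[symmetric] mult.commute)
    also have "\<dots> = (\<Prod>i\<in>UNIV. \<Prod>l\<in>UNIV. (z$l powi c i $ l) powi E j i)"
      by (rule prod.swap)
    also have "\<dots> = (\<Prod>i\<in>UNIV. (monom_pow z (c i)) powi E j i)"
      unfolding monom_pow_def by (simp add: power_int_prod_base)
    also have "\<dots> = 1" using one by simp
    finally show "z$j ^ nat Ni = 1" .
  qed
qed

theorem lemma4p4:
  fixes M :: "(complex ^ 'n) measure"
    and B :: "'n \<Rightarrow> int ^ 'n ^ 'n"
    and k :: "int ^ 'n"
  assumes "borel_prob_on_torus M"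
    and "strongly_independent B"
    and "k \<noteq> 0"
    and "\<forall>i. fourier_coeff M (B i *v k) = 1"
  shows "finitely_supported M"
proof -
  have P: "prob_space M" and S: "sets M = sets (restrict_space borel torus)"
    using assms(1) unfolding borel_prob_on_torus_def by auto
  interpret prob_space M by (rule P)
  have sp: "space M = torus"
    using sets_eq_imp_space_eq[OF S] by (simp add: space_restrict_space)
  define c where "c = (\<lambda>i. B i *v k)"
  define v :: "rat^'n" where "v = (\<chi> j. of_int (k $ j))"
  have v0: "v \<noteq> 0"
  proof
    assume "v = 0"
    then have "\<And>j. k $ j = 0" unfolding v_def by (metis vec_lambda_beta zero_index of_int_eq_0_iff)
    then show False using assms(3) by (simp add: vec_eq_iff)
  qed
  have row: "rat_mat (B i) *v v = (\<chi> j. of_int (c i $ j))" for i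
    by (simp add: vec_eq_iff rat_mat_def v_def c_def matrix_vector_mult_def)
  have indep: "\<forall>a::'n\<Rightarrow>rat. (\<Sum>i\<in>UNIV. a i *s (\<chi> j. of_int (c i $ j))) = 0 \<longrightarrow> (\<forall>i. a i = 0)"
    using assms(2) v0 unfolding strongly_independent_def row[symmetric] by blast
  obtain N :: nat where N: "N > 0"
    and roots: "\<And>z::complex^'n. (\<forall>j. z$j \<noteq> 0) \<Longrightarrow> (\<forall>i. monom_pow z (c i) = 1) \<Longrightarrow> (\<forall>j. z$j ^ N = 1)"
    using roots_from_indep[OF indep] by blast
  define T where "T = torus \<inter> {z::complex^'n. \<forall>j. z$j ^ N = 1}"
  have finT: "finite T"
  proof -
    have "(\<lambda>z. vec_nth z) ` T \<subseteq> PiE (UNIV::'n set) (\<lambda>_. {w::complex. w ^ N = 1})"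
      unfolding T_def by auto
    moreover have "finite (PiE (UNIV::'n set) (\<lambda>_. {w::complex. w ^ N = 1}))"
      using N by (intro finite_PiE finite_roots_unity) auto
    ultimately have "finite ((\<lambda>z. vec_nth z) ` T)" by (rule finite_subset)
    moreover have "inj_on vec_nth T" by (simp add: inj_on_def vec_eq_iff)
    ultimately show ?thesis using finite_imageD by blast
  qed
  have Tsets: "T \<in> sets M"
  proof -
    have "T \<in> sets borel" using finT by (simp add: finite_imp_closed)
    moreover have "T = torus \<inter> T" unfolding T_def by auto
    ultimately show ?thesis unfolding S sets_restrict_space by blast
  qed
  have AEall: "AE z in M. \<forall>i\<in>UNIV. monom_pow z (c i) = 1"
    by (rule AE_finite_allI) (use AE_monom_one[OF P sp] assms(4) c_def in auto)
  have "AE z in M. z \<in> T"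
    using AEall
  proof (rule AE_mp[OF _ AE_I2], intro impI)
    fix z assume z: "z \<in> space M" "\<forall>i\<in>UNIV. monom_pow z (c i) = 1"
    then have "\<forall>j. norm (z $ j) = 1" using sp unfolding torus_def by auto
    then have "\<forall>j. z$j \<noteq> 0" by (metis norm_zero zero_neq_one)
    then have "\<forall>j. z$j ^ N = 1" using roots z by blast
    then show "z \<in> T" using z sp unfolding T_def by auto
  qed
  then have "prob T = 1" using AE_in_set_eq_1[OF Tsets] by simp
  then have "emeasure M T = emeasure M (space M)"
    by (simp add: emeasure_eq_measure prob_space)
  then show ?thesis unfolding finitely_supported_def using finT Tsets by blast
qed

end
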